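(* Let $d\ge 1$, let $\mathcal{A}\in\mathbb{R}^{n_1\times n_2\times\cdots\times n_d}$, let $p\in\{1,\dots,d\}$, and let $R$ be the number of nonzero $p$-fibers of $\mathcal{A}$. Then $\mathcal{A}$ is equal to a tensor train with TT ranks $r_0=r_d=1$ and $r_k=R$ for $1\le k\le d-1$; that is, there exist cores $\mathcal{G}^{(k)}\in\mathbb{R}^{r_{k-1}\times n_k\times r_k}$, $k=1,\dots,d$, with $$\mathcal{A}(i_1,\dots,i_d)=\mathcal{G}^{(1)}(:,i_1,:)\,\mathcal{G}^{(2)}(:,i_2,:)\cdots\mathcal{G}^{(d)}(:,i_d,:)\quad\text{for all }(i_1,\dots,i_d),$$ such that every core $\mathcal{G}^{(k)}$ with $k\neq p$ has all its entries in $\{0,1\}$ (i.e. $\mathcal{G}^{(k)}\in\{0,1\}^{r_{k-1}\times n_k\times r_k}$), while $\mathcal{G}^{(p)}\in\mathbb{R}^{r_{k-1}\times n_p\times r_p}$ is real-valued.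
   Context: For $p\in\{1,\dots,d\}$, a $p$-fiber of $\mathcal{A}$ is a vector obtained by fixing all indices except the $p$-th: for a fixed multi-index $(i_1,\dots,i_{p-1},i_{p+1},\dots,i_d)$, the vector $\mathcal{A}(i_1,\dots,i_{p-1},:,i_{p+1},\dots,i_d)\in\mathbb{R}^{n_p}$. A $p$-fiber is nonzero if it is not the zero vector. A tensor train (TT) with cores $\mathcal{G}^{(k)}\in\mathbb{R}^{r_{k-1}\times n_k\times r_k}$, $r_0=r_d=1$, represents the tensor whose entries are the products of the matrices $\mathcal{G}^{(k)}(:,i_k,:)\in\mathbb{R}^{r_{k-1}\times r_k}$ as displayed; the $r_k$ are called TT ranks. *)

theory Defs
  imports Complex_Main
begin

text \<open>Modes are numbered 1..d; a multi-index is a function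
  i :: nat => nat with i k < n k for k in {1..d} (0-based entries) and i k = 0
  outside {1..d}. A tensor is a function from multi-indices to reals
  (only its values on valid multi-indices matter).\<close>

definition valid_index :: "nat \<Rightarrow> (nat \<Rightarrow> nat) \<Rightarrow> (nat \<Rightarrow> nat) \<Rightarrow> bool" where
  "valid_index d n i \<longleftrightarrow> (\<forall>k\<in>{1..d}. i k < n k) \<and> (\<forall>k. k \<notin> {1..d} \<longrightarrow> i k = 0)"

text \<open>Index sets of p-fibers: all indices except the p-th fixed
  (the p-th entry normalised to 0).\<close>
definition fiber_index :: "nat \<Rightarrow> (nat \<Rightarrow> nat) \<Rightarrow> nat \<Rightarrow> (nat \<Rightarrow> nat) \<Rightarrow> bool" where
  "fiber_index d n p j \<longleftrightarrow> (\<forall>k\<in>{1..d} - {p}. j k < n k) \<and> (\<forall>k. k \<notin> {1..d} - {p} \<longrightarrow> j k = 0)"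

definition nonzero_fiber :: "((nat \<Rightarrow> nat) \<Rightarrow> real) \<Rightarrow> (nat \<Rightarrow> nat) \<Rightarrow> nat \<Rightarrow> (nat \<Rightarrow> nat) \<Rightarrow> bool" where
  "nonzero_fiber A n p j \<longleftrightarrow> (\<exists>t < n p. A (j(p := t)) \<noteq> 0)"

definition num_nonzero_fibers :: "nat \<Rightarrow> (nat \<Rightarrow> nat) \<Rightarrow> ((nat \<Rightarrow> nat) \<Rightarrow> real) \<Rightarrow> nat \<Rightarrow> nat" where
  "num_nonzero_fibers d n A p = card {j. fiber_index d n p j \<and> nonzero_fiber A n p j}"

text \<open>TT evaluation: cores G k a i b = G^(k)(a, i, b), ranks r.
  tt_row G r x k is the row vector G^(1)(:,x_1,:) ... G^(k)(:,x_k,:) of length r k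
  (tt_row for k = 0 is the 1x1 identity row).\<close>
fun tt_row :: "(nat \<Rightarrow> nat \<Rightarrow> nat \<Rightarrow> nat \<Rightarrow> real) \<Rightarrow> (nat \<Rightarrow> nat) \<Rightarrow> (nat \<Rightarrow> nat) \<Rightarrow> nat \<Rightarrow> nat \<Rightarrow> real" where
  "tt_row G r x 0 b = (if b = 0 then 1 else 0)"
| "tt_row G r x (Suc k) b = (\<Sum>a<r k. tt_row G r x k a * G (Suc k) a (x (Suc k)) b)"

definition tt_eval :: "(nat \<Rightarrow> nat \<Rightarrow> nat \<Rightarrow> nat \<Rightarrow> real) \<Rightarrow> (nat \<Rightarrow> nat) \<Rightarrow> nat \<Rightarrow> (nat \<Rightarrow> nat) \<Rightarrow> real" where
  "tt_eval G r d x = tt_row G r x d 0"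

end

theory Submission
  imports Defs "HOL-Library.FuncSet"
begin

lemma fin_S:
  "finite {j. fiber_index d n p j \<and> nonzero_fiber A n p j}" (is "finite ?S")
proof -
  have inj: "inj_on (\<lambda>j. restrict j {1..d}) ?S"
  proof (rule inj_onI)
    fix j j' assume j: "j \<in> ?S" and j': "j' \<in> ?S" and e: "restrict j {1..d} = restrict j' {1..d}"
    show "j = j'"
    proof
      fix k show "j k = j' k"
      proof (cases "k \<in> {1..d} - {p}")
        case True then show ?thesis using e by (metis DiffD1 restrict_apply')
      next
        case False then show ?thesis using j j' by (simp add: fiber_index_def)
      qed
    qed
  qed
  have "(\<lambda>j. restrict j {1..d}) ` ?S \<subseteq> PiE {1..d} (\<lambda>k. {..<max (n k) 1})"
  proof
    fix y assume "y \<in> (\<lambda>j. restrict j {1..d}) ` ?S"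
    then obtain j where j: "j \<in> ?S" and y: "y = restrict j {1..d}" by blast
    have "\<forall>k\<in>{1..d}. j k < max (n k) 1"
    proof
      fix k assume k: "k \<in> {1..d}"
      show "j k < max (n k) 1"
      proof (cases "k = p")
        case True then show ?thesis using j by (simp add: fiber_index_def)
      next
        case False
        then have "j k < n k" using j k by (simp add: fiber_index_def)
        then show ?thesis by simp
      qed
    qed
    then show "y \<in> PiE {1..d} (\<lambda>k. {..<max (n k) 1})" using y by auto
  qed
  moreover have "finite (PiE {1..d} (\<lambda>k. {..<max (n k) 1}))" by (simp add: finite_PiE)
  ultimately have "finite ((\<lambda>j. restrict j {1..d}) ` ?S)" using finite_subset by blast
  then show ?thesis using inj finite_imageD by blast
qed

theorem theorem1:
  fixes d p :: nat and n :: "nat \<Rightarrow> nat" and A :: "(nat \<Rightarrow> nat) \<Rightarrow> real"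
  assumes "d \<ge> 1" and "p \<in> {1..d}"
  defines "R \<equiv> num_nonzero_fibers d n A p"
  defines "r \<equiv> (\<lambda>k. if k = 0 \<or> k = d then 1 else R)"
  shows "\<exists>G :: nat \<Rightarrow> nat \<Rightarrow> nat \<Rightarrow> nat \<Rightarrow> real.
           (\<forall>x. valid_index d n x \<longrightarrow> A x = tt_eval G r d x) \<and>
           (\<forall>k\<in>{1..d}. k \<noteq> p \<longrightarrow>
              (\<forall>a < r (k - 1). \<forall>t < n k. \<forall>b < r k. G k a t b \<in> {0, 1}))"
proof (cases "d = 1")
  case True
  define G :: "nat \<Rightarrow> nat \<Rightarrow> nat \<Rightarrow> nat \<Rightarrow> real" where
    "G = (\<lambda>k a t b. A (\<lambda>m. if m = 1 then t else 0))"
  have "\<forall>x. valid_index d n x \<longrightarrow> A x = tt_eval G r d x"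
  proof (intro allI impI)
    fix x assume v: "valid_index d n x"
    have e: "x = (\<lambda>m. if m = Suc 0 then x (Suc 0) else 0)"
      using v True by (auto simp: valid_index_def)
    have "tt_eval G r d x = A (\<lambda>m. if m = Suc 0 then x (Suc 0) else 0)"
      using True by (simp add: tt_eval_def G_def r_def One_nat_def)
    then show "A x = tt_eval G r d x" using e by metis
  qed
  moreover have "p = 1" using assms(2) True by auto
  ultimately show ?thesis using True by auto
next
  case False
  hence d2: "d \<ge> 2" using assms(1) by auto
  define S where "S = {j. fiber_index d n p j \<and> nonzero_fiber A n p j}"
  have finS: "finite S" unfolding S_def by (rule fin_S)
  have RS: "R = card S" unfolding R_def S_def num_nonzero_fibers_def by simp
  obtain f where f: "bij_betw f {0..<R} S" using ex_bij_betw_nat_finite[OF finS] RS by auto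
  define g :: "nat \<Rightarrow> nat \<Rightarrow> nat \<Rightarrow> real" where
    "g = (\<lambda>m c t. if m = p then A ((f c)(p := t)) else (if f c m = t then 1 else 0))"
  define G :: "nat \<Rightarrow> nat \<Rightarrow> nat \<Rightarrow> nat \<Rightarrow> real" where
    "G = (\<lambda>k a t b. if k \<noteq> 1 \<and> k \<noteq> d \<and> a \<noteq> b then 0 else g k (if k = 1 then b else a) t)"
  have rowk: "tt_row G r x k b = (\<Prod>m\<in>{1..k}. g m b (x m))"
    if "1 \<le> k" "k \<le> d - 1" "b < R" for x k b
    using that
  proof (induction k arbitrary: b)
    case 0 then show ?case by simp
  next
    case (Suc k)
    show ?case
    proof (cases "k = 0")
      case True then show ?thesis by (simp add: G_def r_def)
    next
      case False
      have rk: "r k = R" using False Suc.prems d2 by (auto simp: r_def)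
      have "tt_row G r x (Suc k) b = (\<Sum>a<R. tt_row G r x k a * G (Suc k) a (x (Suc k)) b)"
        by (simp add: rk)
      also have "\<dots> = tt_row G r x k b * G (Suc k) b (x (Suc k)) b"
      proof -
        have "(\<Sum>a<R. tt_row G r x k a * G (Suc k) a (x (Suc k)) b)
            = (\<Sum>a<R. if a = b then tt_row G r x k b * G (Suc k) b (x (Suc k)) b else 0)"
          by (rule sum.cong) (use Suc.prems False in \<open>auto simp: G_def\<close>)
        then show ?thesis using Suc.prems by simp
      qed
      also have "\<dots> = (\<Prod>m\<in>{1..k}. g m b (x m)) * g (Suc k) b (x (Suc k))"
        using Suc False by (simp add: G_def)
      also have "\<dots> = (\<Prod>m\<in>{1..Suc k}. g m b (x m))"
        by (simp add: atLeastAtMostSuc_conv mult.commute)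
      finally show ?thesis .
    qed
  qed
  have rowd: "tt_row G r x d 0 = (\<Sum>a<R. \<Prod>m\<in>{1..d}. g m a (x m))" for x
  proof -
    have dd: "d = Suc (d - 1)" using d2 by simp
    have rd: "r (d - 1) = R" using d2 by (auto simp: r_def)
    have "tt_row G r x d 0 = tt_row G r x (Suc (d - 1)) 0" using dd by simp
    also have "\<dots> = (\<Sum>a<R. tt_row G r x (d - 1) a * G d a (x d) 0)"
      using rd dd by (metis tt_row.simps(2))
    also have "\<dots> = (\<Sum>a<R. (\<Prod>m\<in>{1..d-1}. g m a (x m)) * g d a (x d))"
    proof (rule sum.cong)
      fix a assume "a \<in> {..<R}"
      then have "tt_row G r x (d - 1) a = (\<Prod>m\<in>{1..d-1}. g m a (x m))"
        using d2 by (intro rowk) auto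
      moreover have "G d a (x d) 0 = g d a (x d)" using d2 by (simp add: G_def)
      ultimately show "tt_row G r x (d - 1) a * G d a (x d) 0 = (\<Prod>m\<in>{1..d-1}. g m a (x m)) * g d a (x d)"
        by simp
    qed simp
    also have "\<dots> = (\<Sum>a<R. \<Prod>m\<in>{1..d}. g m a (x m))"
    proof (rule sum.cong)
      fix a
      have "{1..d} = insert d {1..d-1}" using d2 by auto
      then show "(\<Prod>m\<in>{1..d-1}. g m a (x m)) * g d a (x d) = (\<Prod>m\<in>{1..d}. g m a (x m))"
        using d2 by (simp add: mult.commute)
    qed simp
    finally show ?thesis .
  qed
  have prodf: "(\<Prod>m\<in>{1..d}. g m a (x m)) = (if f a = x(p := 0) then A x else 0)"
    if v: "valid_index d n x" and a: "a < R" for x a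
  proof -
    have fa: "f a \<in> S" using f a by (auto simp: bij_betw_def)
    hence fi: "fiber_index d n p (f a)" by (simp add: S_def)
    have eqv: "(\<forall>m\<in>{1..d}-{p}. f a m = x m) \<longleftrightarrow> f a = x(p := 0)"
    proof
      assume H: "\<forall>m\<in>{1..d}-{p}. f a m = x m"
      show "f a = x(p := 0)"
      proof
        fix m show "f a m = (x(p := 0)) m"
          using H fi v by (cases "m \<in> {1..d} - {p}") (auto simp: fiber_index_def valid_index_def)
      qed
    qed auto
    have "(\<Prod>m\<in>{1..d}. g m a (x m)) = g p a (x p) * (\<Prod>m\<in>{1..d}-{p}. g m a (x m))"
      using assms(2) by (simp add: prod.remove)
    also have "(\<Prod>m\<in>{1..d}-{p}. g m a (x m)) = (if \<forall>m\<in>{1..d}-{p}. f a m = x m then 1 else 0)"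
    proof (cases "\<forall>m\<in>{1..d}-{p}. f a m = x m")
      case True
      then show ?thesis by (simp add: g_def)
    next
      case False
      then obtain m where "m \<in> {1..d}-{p}" "f a m \<noteq> x m" by blast
      then have "(\<Prod>m\<in>{1..d}-{p}. g m a (x m)) = 0"
        by (subst prod_zero_iff) (auto simp: g_def)
      then show ?thesis using False by (simp only: if_False)
    qed
    finally show ?thesis using eqv by (auto simp: g_def)
  qed
  have main: "\<forall>x. valid_index d n x \<longrightarrow> A x = tt_eval G r d x"
  proof (intro allI impI)
    fix x assume v: "valid_index d n x"
    define j0 where "j0 = x(p := 0)"
    have "tt_eval G r d x = (\<Sum>a<R. if f a = j0 then A x else 0)"
      unfolding tt_eval_def rowd j0_def by (rule sum.cong) (use v prodf in auto)
    also have "\<dots> = A x"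
    proof (cases "j0 \<in> S")
      case True
      then obtain a0 where a0: "a0 < R" "f a0 = j0" using f by (auto simp: bij_betw_def)
      have "(\<Sum>a<R. if f a = j0 then A x else 0) = (\<Sum>a<R. if a = a0 then A x else 0)"
      proof (rule sum.cong)
        fix a assume "a \<in> {..<R}"
        then have "f a = j0 \<longleftrightarrow> a = a0" using a0 f
          by (auto simp: bij_betw_def inj_on_def)
        then show "(if f a = j0 then A x else 0) = (if a = a0 then A x else 0)" by simp
      qed simp
      then show ?thesis using a0 by simp
    next
      case False
      have fi: "fiber_index d n p j0" using v assms(2) by (auto simp: fiber_index_def valid_index_def j0_def)
      have xp: "x p < n p" using v assms(2) by (auto simp: valid_index_def)
      have "j0(p := x p) = x" by (simp add: j0_def)
      then have "A x = 0" using False fi xp unfolding S_def nonzero_fiber_def by auto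
      moreover have "f a \<noteq> j0" if "a < R" for a using f that False by (auto simp: bij_betw_def)
      ultimately show ?thesis by simp
    qed
    finally show "A x = tt_eval G r d x" by simp
  qed
  have "\<forall>k\<in>{1..d}. k \<noteq> p \<longrightarrow> (\<forall>a < r (k - 1). \<forall>t < n k. \<forall>b < r k. G k a t b \<in> {0, 1})"
    by (auto simp: G_def g_def)
  with main show ?thesis by blast
qed

end
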